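(* Let $\mathcal{X}=\{x_1,\dots,x_n\}$, let $\mathcal{X}_{\mathrm{in}}\subseteq\mathcal{X}$ have $n_{\mathrm{in}}\ge2$ points, let $1\le n_{\mathrm{out}}\le n_{\mathrm{in}}$, and let $\mathcal{X}_{\mathrm{out}}$ be a subset of $\mathcal{X}_{\mathrm{in}}$ of size $n_{\mathrm{out}}$ chosen uniformly at random (i.e., uniform subsampling without replacement). Then for every symmetric positive semidefinite $K\in\mathbb{R}^{n\times n}$ and every $\mathcal{I}\subseteq[n]$, $$\mathbb{E}\big[\mathrm{MMD}_K^2(p_{\mathrm{in}},q_{\mathrm{out}})\big]=\frac{1}{n_{\mathrm{out}}}\cdot\frac{n_{\mathrm{in}}-n_{\mathrm{out}}}{n_{\mathrm{in}}-1}\,C_K$$ and $$\mathbb{E}\big[\|K(p_{\mathrm{in}}-q_{\mathrm{out}})\|_{\mathcal{I}}^2\big]\ge\frac{1}{n_{\mathrm{out}}}\cdot\frac{n_{\mathrm{in}}-n_{\mathrm{out}}}{n_{\mathrm{in}}-1}\,\max_{i\in\mathcal{I}}C_{Ke_ie_i^\top K},$$ where for an $n\times n$ matrix $M$, $C_M:=\sum_{i=1}^n p_{\mathrm{in},i}M_{ii}-p_{\mathrm{in}}^\top Mp_{\mathrm{in}}$.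
   Context: $p_{\mathrm{in}},q_{\mathrm{out}}\in\mathbb{R}^n$ are given by $p_{\mathrm{in},i}=\mathbf{1}\{x_i\in\mathcal{X}_{\mathrm{in}}\}/n_{\mathrm{in}}$ and $q_{\mathrm{out},i}=\mathbf{1}\{x_i\in\mathcal{X}_{\mathrm{out}}\}/n_{\mathrm{out}}$. $\mathrm{MMD}_K(p,q):=\sqrt{(p-q)^\top K(p-q)}$ and $\|K(p_{\mathrm{in}}-q_{\mathrm{out}})\|_{\mathcal{I}}:=\max_{i\in\mathcal{I}}|e_i^\top K(p_{\mathrm{in}}-q_{\mathrm{out}})|$, with $e_i$ the $i$-th standard basis vector. *)

theory Defs
  imports "HOL-Probability.Probability"
begin

text \<open>Points x_1..x_n are identified with the indices of the finite type 'n.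
  Uniform empirical distribution on a set S of indices.\<close>
definition unif_vec :: "'n::finite set \<Rightarrow> real^'n" where
  "unif_vec S = (\<chi> i. if i \<in> S then 1 / real (card S) else 0)"

definition MMD :: "real^'n^'n \<Rightarrow> real^'n \<Rightarrow> real^'n \<Rightarrow> real" where
  "MMD K p q = sqrt ((p - q) \<bullet> (K *v (p - q)))"

definition normI :: "real^'n \<Rightarrow> 'n set \<Rightarrow> real" where
  "normI v I = Max ((\<lambda>i. \<bar>axis i 1 \<bullet> v\<bar>) ` I)"

definition C_mat :: "real^'n^'n \<Rightarrow> real^'n \<Rightarrow> real" where
  "C_mat M p = (\<Sum>i\<in>UNIV. p $ i * M $ i $ i) - p \<bullet> (M *v p)"

definition outer_e :: "'n::finite \<Rightarrow> real^'n^'n" where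
  "outer_e i = (\<chi> a b. axis i (1::real) $ a * axis i (1::real) $ b)"

definition psd :: "real^'n^'n \<Rightarrow> bool" where
  "psd K \<longleftrightarrow> transpose K = K \<and> (\<forall>x. 0 \<le> x \<bullet> (K *v x))"

end

theory Submission
  imports Defs
begin


lemma card_supsets:
  assumes "finite A" "B \<subseteq> A" "card B \<le> m"
  shows "card {S. S \<subseteq> A \<and> card S = m \<and> B \<subseteq> S} = (card A - card B) choose (m - card B)"
proof -
  have fB: "finite B" using assms finite_subset by blast
  have "bij_betw (\<lambda>S. S - B) {S. S \<subseteq> A \<and> card S = m \<and> B \<subseteq> S} {T. T \<subseteq> A - B \<and> card T = m - card B}"
  proof (rule bij_betw_byWitness[where f' = "\<lambda>T. T \<union> B"])
    show "\<forall>S\<in>{S. S \<subseteq> A \<and> card S = m \<and> B \<subseteq> S}. S - B \<union> B = S" by auto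
    show "\<forall>T\<in>{T. T \<subseteq> A - B \<and> card T = m - card B}. T \<union> B - B = T" by auto
    show "(\<lambda>S. S - B) ` {S. S \<subseteq> A \<and> card S = m \<and> B \<subseteq> S} \<subseteq> {T. T \<subseteq> A - B \<and> card T = m - card B}"
      using fB by (auto simp: card_Diff_subset)
    show "(\<lambda>T. T \<union> B) ` {T. T \<subseteq> A - B \<and> card T = m - card B} \<subseteq> {S. S \<subseteq> A \<and> card S = m \<and> B \<subseteq> S}"
    proof -
      have "T \<union> B \<in> {S. S \<subseteq> A \<and> card S = m \<and> B \<subseteq> S}" if T: "T \<subseteq> A - B" "card T = m - card B" for T
      proof -
        have "finite T" using T assms(1) finite_subset by blast
        then have "card (T \<union> B) = card T + card B" using fB T by (subst card_Un_disjoint) auto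
        then show ?thesis using T assms by auto
      qed
      then show ?thesis by blast
    qed
  qed
  then have "card {S. S \<subseteq> A \<and> card S = m \<and> B \<subseteq> S} = card {T. T \<subseteq> A - B \<and> card T = m - card B}"
    by (rule bij_betw_same_card)
  also have "\<dots> = card (A - B) choose (m - card B)" using assms by (intro n_subsets) auto
  also have "card (A - B) = card A - card B" using fB assms by (simp add: card_Diff_subset)
  finally show ?thesis .
qed

lemma sum_ind: "finite F \<Longrightarrow> (\<Sum>S\<in>F. if P S then 1 else 0 :: real) = real (card {S\<in>F. P S})"
  by (simp add: sum.If_cases Int_def)

lemma count1:
  fixes X :: "'a set"
  assumes fin: "finite X" and a: "a \<in> X" and m: "1 \<le> m" "m \<le> card X"
  shows "real (card {S. S \<subseteq> X \<and> card S = m \<and> a \<in> S}) * real (card X)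
         = real m * real (card {S. S \<subseteq> X \<and> card S = m})"
proof -
  have "{S. S \<subseteq> X \<and> card S = m \<and> a \<in> S} = {S. S \<subseteq> X \<and> card S = m \<and> {a} \<subseteq> S}" by auto
  then have e1: "card {S. S \<subseteq> X \<and> card S = m \<and> a \<in> S} = (card X - 1) choose (m - 1)"
    using card_supsets[of X "{a}" m] fin a m by simp
  have e2: "card {S. S \<subseteq> X \<and> card S = m} = card X choose m" using fin by (rule n_subsets)
  have "Suc (m-1) * (card X choose Suc (m-1)) = card X * ((card X - 1) choose (m-1))"
    by (rule binomial_absorption)
  then have "m * (card X choose m) = card X * ((card X - 1) choose (m-1))" using m by simp
  then have "real m * real (card X choose m) = real (card X) * real ((card X - 1) choose (m-1))"
    by (metis of_nat_mult)
  then show ?thesis unfolding e1 e2 by (simp add: mult.commute)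
qed

lemma count2:
  fixes X :: "'a set"
  assumes fin: "finite X" and a: "a \<in> X" "b \<in> X" "a \<noteq> b" and m: "1 \<le> m" "m \<le> card X"
  shows "real (card {S. S \<subseteq> X \<and> card S = m \<and> a \<in> S \<and> b \<in> S}) * real (card X) * (real (card X) - 1)
         = real m * (real m - 1) * real (card {S. S \<subseteq> X \<and> card S = m})"
proof (cases "m = 1")
  case True
  have E: "{S. S \<subseteq> X \<and> card S = m \<and> a \<in> S \<and> b \<in> S} = {}"
  proof (rule ccontr)
    assume "{S. S \<subseteq> X \<and> card S = m \<and> a \<in> S \<and> b \<in> S} \<noteq> {}"
    then obtain S where S: "S \<subseteq> X" "card S = 1" "a \<in> S" "b \<in> S" using True by auto
    then obtain x where "S = {x}" by (auto simp: card_Suc_eq)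
    then show False using S a by auto
  qed
  show ?thesis unfolding E using True by simp
next
  case False
  then have m2: "2 \<le> m" using m by simp
  have "{S. S \<subseteq> X \<and> card S = m \<and> a \<in> S \<and> b \<in> S} = {S. S \<subseteq> X \<and> card S = m \<and> {a,b} \<subseteq> S}" by auto
  then have e1: "card {S. S \<subseteq> X \<and> card S = m \<and> a \<in> S \<and> b \<in> S} = (card X - 2) choose (m - 2)"
    using card_supsets[of X "{a,b}" m] fin a m2 by (simp add: numeral_2_eq_2)
  have e2: "card {S. S \<subseteq> X \<and> card S = m} = card X choose m" using fin by (rule n_subsets)
  have "Suc (m-1) * (card X choose Suc (m-1)) = card X * ((card X - 1) choose (m-1))"
    by (rule binomial_absorption)
  then have h1: "m * (card X choose m) = card X * ((card X - 1) choose (m-1))" using m by simp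
  have "Suc (m-2) * ((card X - 1) choose Suc (m-2)) = (card X - 1) * ((card X - 1 - 1) choose (m-2))"
    by (rule binomial_absorption)
  then have h2: "(m - 1) * ((card X - 1) choose (m - 1)) = (card X - 1) * ((card X - 2) choose (m-2))"
    using m2 by (simp add: Suc_diff_Suc numeral_2_eq_2)
  have "m * (m - 1) * (card X choose m) = card X * (card X - 1) * ((card X - 2) choose (m-2))"
    using h1 h2 by (metis mult.assoc mult.left_commute)
  then have "real (m * (m - 1) * (card X choose m)) = real (card X * (card X - 1) * ((card X - 2) choose (m-2)))"
    by simp
  moreover have "card X \<ge> 1" "m \<ge> 1" using m by auto
  ultimately show ?thesis unfolding e1 e2 by (simp add: of_nat_diff algebra_simps)
qed

lemma key:
  fixes X :: "'n::finite set" and m :: nat and a b :: 'n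
  assumes N2: "card X \<ge> 2" and m: "1 \<le> m" "m \<le> card X"
  defines "F \<equiv> {S. S \<subseteq> X \<and> card S = m}"
  shows "(\<Sum>S\<in>F. (unif_vec X - unif_vec S) $ a * (unif_vec X - unif_vec S) $ b)
     = real (card F) * ((real (card X) - real m) / (real m * (real (card X) - 1)))
       * ((if a = b then unif_vec X $ a else 0) - unif_vec X $ a * unif_vec X $ b)"
proof -
  define N where "N = real (card X)"
  define ind :: "bool \<Rightarrow> real" where "ind P = (if P then 1 else 0)" for P
  have fF: "finite F" unfolding F_def by simp
  have Npos: "N \<ge> 2" using N2 unfolding N_def by simp
  have Npos': "real (card X) \<ge> 2" using N2 by simp
  have mpos: "real m \<ge> 1" using m by simp
  have summ: "(unif_vec X - unif_vec S) $ a * (unif_vec X - unif_vec S) $ b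
      = (if a \<in> X \<and> b \<in> X then 1/N^2 - ind (a \<in> S)/(N*m) - ind (b \<in> S)/(N*m) + ind (a \<in> S \<and> b \<in> S)/m^2 else 0)"
    if S: "S \<in> F" for S
  proof -
    have "S \<subseteq> X" "card S = m" using S unfolding F_def by auto
    then show ?thesis unfolding unif_vec_def N_def ind_def
      by (auto simp: power2_eq_square field_simps)
  qed
  have sumind: "(\<Sum>S\<in>F. ind (P S)) = real (card {S\<in>F. P S})" for P
    unfolding ind_def using fF by (rule sum_ind)
  have FS: "{S\<in>F. P S} = {S. S \<subseteq> X \<and> card S = m \<and> P S}" for P unfolding F_def by auto
  show ?thesis
  proof (cases "a \<in> X \<and> b \<in> X")
    case False
    then have "(unif_vec X - unif_vec S) $ a * (unif_vec X - unif_vec S) $ b = 0" if "S \<in> F" for S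
      using summ[OF that] False by auto
    then have "(\<Sum>S\<in>F. (unif_vec X - unif_vec S) $ a * (unif_vec X - unif_vec S) $ b) = 0"
      by (intro sum.neutral) blast
    moreover have "unif_vec X $ a = 0 \<or> unif_vec X $ b = 0" using False unfolding unif_vec_def by auto
    ultimately show ?thesis by auto
  next
    case True
    then have "(\<Sum>S\<in>F. (unif_vec X - unif_vec S) $ a * (unif_vec X - unif_vec S) $ b)
      = (\<Sum>S\<in>F. 1/N^2 - ind (a \<in> S)/(N*m) - ind (b \<in> S)/(N*m) + ind (a \<in> S \<and> b \<in> S)/m^2)"
      using summ by (intro sum.cong) auto
    also have "\<dots> = card F / N^2 - (\<Sum>S\<in>F. ind (a \<in> S))/(N*m) - (\<Sum>S\<in>F. ind (b \<in> S))/(N*m)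
        + (\<Sum>S\<in>F. ind (a \<in> S \<and> b \<in> S))/m^2"
      by (simp add: sum.distrib sum_subtractf sum_divide_distrib)
    also have "\<dots> = card F / N^2 - real (card {S. S \<subseteq> X \<and> card S = m \<and> a \<in> S})/(N*m)
        - real (card {S. S \<subseteq> X \<and> card S = m \<and> b \<in> S})/(N*m)
        + real (card {S. S \<subseteq> X \<and> card S = m \<and> a \<in> S \<and> b \<in> S})/m^2"
      unfolding sumind FS by simp
    finally have eq: "(\<Sum>S\<in>F. (unif_vec X - unif_vec S) $ a * (unif_vec X - unif_vec S) $ b) = \<dots>" .
    have ca: "real (card {S. S \<subseteq> X \<and> card S = m \<and> a \<in> S}) = real m * card F / N"
      using count1[of X a m] True m Npos' unfolding F_def N_def by (auto simp: eq_divide_eq mult.commute)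
    have cb: "real (card {S. S \<subseteq> X \<and> card S = m \<and> b \<in> S}) = real m * card F / N"
      using count1[of X b m] True m Npos' unfolding F_def N_def by (auto simp: eq_divide_eq mult.commute)
    have pa: "unif_vec X $ a = 1/N" "unif_vec X $ b = 1/N" using True unfolding unif_vec_def N_def by auto
    show ?thesis
    proof (cases "a = b")
      case True
      have cab: "real (card {S. S \<subseteq> X \<and> card S = m \<and> a \<in> S \<and> b \<in> S}) = real m * card F / N"
        using ca True by simp
      show ?thesis using True unfolding eq ca cb cab pa N_def[symmetric] using Npos mpos
        by (simp add: field_simps power2_eq_square)
    next
      case False
      have cab: "real (card {S. S \<subseteq> X \<and> card S = m \<and> a \<in> S \<and> b \<in> S}) = real m * (real m - 1) * card F / (N * (N - 1))"
        using count2[of X a b m] True False m Npos' unfolding F_def N_def by (auto simp: eq_divide_eq mult.commute mult.left_commute)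
      show ?thesis unfolding eq ca cb cab pa N_def[symmetric] using Npos mpos False
        by (simp add: field_simps power2_eq_square)
    qed
  qed
qed

lemma quad_expand: "(v::real^'n::finite) \<bullet> (M *v v) = (\<Sum>a\<in>UNIV. \<Sum>b\<in>UNIV. M$a$b * (v$a * v$b))"
  by (simp add: inner_vec_def matrix_vector_mult_def sum_distrib_left mult_ac)

lemma C_mat_expand: "C_mat M (p::real^'n::finite) = (\<Sum>a\<in>UNIV. \<Sum>b\<in>UNIV. M$a$b * ((if a = b then p$a else 0) - p$a * p$b))"
proof -
  have "(\<Sum>a\<in>UNIV. \<Sum>b\<in>UNIV. M$a$b * ((if a = b then p$a else 0) - p$a * p$b))
     = (\<Sum>a\<in>UNIV. \<Sum>b\<in>UNIV. (if a = b then p$a * M$a$b else 0)) - (\<Sum>a\<in>UNIV. \<Sum>b\<in>UNIV. M$a$b * (p$a * p$b))"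
  proof -
    have pt: "M$a$b * ((if a = b then p$a else 0) - p$a * p$b) = (if a = b then p$a * M$a$b else 0) - M$a$b * (p$a * p$b)" for a b
      by (simp add: algebra_simps)
    show ?thesis by (simp only: pt sum_subtractf)
  qed
  also have "(\<Sum>a\<in>UNIV. \<Sum>b\<in>UNIV. (if a = b then p$a * M$a$b else 0)) = (\<Sum>i\<in>UNIV. p $ i * M $ i $ i)"
    by simp
  finally show ?thesis unfolding C_mat_def quad_expand by simp
qed

lemma quad_sum:
  fixes X :: "'n::finite set" and m :: nat and M :: "real^'n^'n"
  assumes N2: "card X \<ge> 2" and m: "1 \<le> m" "m \<le> card X"
  defines "F \<equiv> {S. S \<subseteq> X \<and> card S = m}"
  shows "(\<Sum>S\<in>F. (unif_vec X - unif_vec S) \<bullet> (M *v (unif_vec X - unif_vec S)))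
     = real (card F) * ((real (card X) - real m) / (real m * (real (card X) - 1))) * C_mat M (unif_vec X)"
proof -
  let ?k = "real (card F) * ((real (card X) - real m) / (real m * (real (card X) - 1)))"
  let ?p = "unif_vec X"
  have "(\<Sum>S\<in>F. (?p - unif_vec S) \<bullet> (M *v (?p - unif_vec S)))
     = (\<Sum>S\<in>F. \<Sum>a\<in>UNIV. \<Sum>b\<in>UNIV. M$a$b * ((?p - unif_vec S)$a * (?p - unif_vec S)$b))"
    unfolding quad_expand ..
  also have "\<dots> = (\<Sum>a\<in>UNIV. \<Sum>b\<in>UNIV. M$a$b * (\<Sum>S\<in>F. (?p - unif_vec S)$a * (?p - unif_vec S)$b))"
    by (simp add: sum_distrib_left sum.swap[of _ F])
  also have "\<dots> = (\<Sum>a\<in>UNIV. \<Sum>b\<in>UNIV. M$a$b * (?k * ((if a = b then ?p$a else 0) - ?p$a * ?p$b)))"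
    using key[OF N2 m] unfolding F_def by simp
  also have "\<dots> = ?k * C_mat M ?p"
    unfolding C_mat_expand by (simp add: sum_distrib_left mult_ac)
  finally show ?thesis .
qed

lemma entry_outer: "(K ** outer_e i ** K) $ a $ b = K$a$i * (K$i$b :: real)"
proof -
  have h: "(K ** outer_e i) $ a $ c = (if c = i then K$a$i else 0)" for c
    by (simp add: matrix_matrix_mult_def outer_e_def axis_def if_distrib[of "\<lambda>x. K$a$_ * x"] cong: if_cong)
  have "(K ** outer_e i ** K) $ a $ b = (\<Sum>c\<in>UNIV. (K ** outer_e i) $ a $ c * K$c$b)"
    by (simp only: matrix_matrix_mult_def[of "K ** outer_e i" K] vec_lambda_beta)
  also have "\<dots> = (\<Sum>c\<in>UNIV. (if c = i then K$a$i * K$c$b else 0))"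
    by (simp only: h if_distrib[of "\<lambda>x. x * K$_$b"] mult_zero_left)
  finally show ?thesis by simp
qed

lemma sq_outer:
  fixes K :: "real^'n::finite^'n"
  assumes "transpose K = K"
  shows "(axis i 1 \<bullet> (K *v w))\<^sup>2 = w \<bullet> ((K ** outer_e i ** K) *v w)"
proof -
  have sym: "K$a$b = K$b$a" for a b using assms by (metis transpose_def vec_lambda_beta)
  have "axis i 1 \<bullet> (K *v w) = (\<Sum>a\<in>UNIV. K$i$a * w$a)"
    by (simp add: inner_axis' matrix_vector_mult_def)
  moreover have "w \<bullet> ((K ** outer_e i ** K) *v w) = (\<Sum>a\<in>UNIV. K$i$a * w$a) * (\<Sum>b\<in>UNIV. K$i$b * w$b)"
    unfolding quad_expand entry_outer by (simp add: sum_product sym mult_ac)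
  ultimately show ?thesis by (simp add: power2_eq_square)
qed


theorem proposition1:
  fixes Xin :: "'n::finite set" and nout :: nat and K :: "real^'n^'n" and I :: "'n set"
  assumes "card Xin \<ge> 2" and "1 \<le> nout" and "nout \<le> card Xin"
    and "psd K" and "I \<noteq> {}"
  defines "Sub \<equiv> pmf_of_set {S. S \<subseteq> Xin \<and> card S = nout}"
  shows "(measure_pmf.expectation Sub (\<lambda>S. (MMD K (unif_vec Xin) (unif_vec S))\<^sup>2)
           = 1 / real nout * ((real (card Xin) - real nout) / (real (card Xin) - 1))
             * C_mat K (unif_vec Xin))
    \<and> (measure_pmf.expectation Sub (\<lambda>S. (normI (K *v (unif_vec Xin - unif_vec S)) I)\<^sup>2)
           \<ge> 1 / real nout * ((real (card Xin) - real nout) / (real (card Xin) - 1))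
             * Max ((\<lambda>i. C_mat (K ** outer_e i ** K) (unif_vec Xin)) ` I))"
proof -
  define F where "F = {S. S \<subseteq> Xin \<and> card S = nout}"
  define \<kappa> where "\<kappa> = 1 / real nout * ((real (card Xin) - real nout) / (real (card Xin) - 1))"
  let ?p = "unif_vec Xin"
  have fF: "finite F" unfolding F_def by simp
  have cF: "card F = card Xin choose nout" unfolding F_def by (rule n_subsets) simp
  have cFpos: "card F > 0" unfolding cF using assms(3) by simp
  then have Fne: "F \<noteq> {}" by auto
  have Sub: "Sub = pmf_of_set F" unfolding Sub_def F_def ..
  have E: "measure_pmf.expectation Sub f = sum f F / card F" for f :: "'n set \<Rightarrow> real"
    unfolding Sub using integral_pmf_of_set[OF Fne fF] by simp
  have QS: "(\<Sum>S\<in>F. (?p - unif_vec S) \<bullet> (M *v (?p - unif_vec S))) / card F = \<kappa> * C_mat M ?p" for M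
  proof -
    have k: "(real (card Xin) - real nout) / (real nout * (real (card Xin) - 1)) = \<kappa>"
      unfolding \<kappa>_def by simp
    have "(\<Sum>S\<in>F. (?p - unif_vec S) \<bullet> (M *v (?p - unif_vec S))) = real (card F) * (\<kappa> * C_mat M ?p)"
      using quad_sum[OF assms(1-3), of M] unfolding F_def[symmetric] k by simp
    then show ?thesis using cFpos Fne by simp
  qed
  have symK: "transpose K = K" and psdK: "\<And>x. 0 \<le> x \<bullet> (K *v x)" using assms(4) unfolding psd_def by auto
  have part1: "measure_pmf.expectation Sub (\<lambda>S. (MMD K ?p (unif_vec S))\<^sup>2) = \<kappa> * C_mat K ?p"
    unfolding E MMD_def using psdK QS[of K] by simp
  have part2: "measure_pmf.expectation Sub (\<lambda>S. (normI (K *v (?p - unif_vec S)) I)\<^sup>2) \<ge> \<kappa> * C_mat (K ** outer_e i ** K) ?p"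
    if i: "i \<in> I" for i
  proof -
    have le: "(?p - unif_vec S) \<bullet> ((K ** outer_e i ** K) *v (?p - unif_vec S)) \<le> (normI (K *v (?p - unif_vec S)) I)\<^sup>2" for S
    proof -
      let ?v = "K *v (?p - unif_vec S)"
      have "\<bar>axis i 1 \<bullet> ?v\<bar> \<le> normI ?v I" unfolding normI_def using i by (intro Max_ge) auto
      then have "(axis i 1 \<bullet> ?v)\<^sup>2 \<le> (normI ?v I)\<^sup>2"
        by (metis abs_ge_zero abs_le_square_iff abs_of_nonneg order_trans power2_abs)
      then show ?thesis using sq_outer[OF symK, of i "?p - unif_vec S"] by simp
    qed
    have "\<kappa> * C_mat (K ** outer_e i ** K) ?p = (\<Sum>S\<in>F. (?p - unif_vec S) \<bullet> ((K ** outer_e i ** K) *v (?p - unif_vec S))) / card F"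
      using QS by simp
    also have "\<dots> \<le> (\<Sum>S\<in>F. (normI (K *v (?p - unif_vec S)) I)\<^sup>2) / card F"
      by (intro divide_right_mono sum_mono le) simp
    finally show ?thesis unfolding E .
  qed
  have "finite I" by simp
  then have "Max ((\<lambda>i. C_mat (K ** outer_e i ** K) ?p) ` I) \<in> (\<lambda>i. C_mat (K ** outer_e i ** K) ?p) ` I"
    using assms(5) by (intro Max_in) auto
  then obtain i where "i \<in> I" and mx: "Max ((\<lambda>i. C_mat (K ** outer_e i ** K) ?p) ` I) = C_mat (K ** outer_e i ** K) ?p"
    by auto
  then show ?thesis using part1 part2[of i] unfolding \<kappa>_def mx by simp
qed

end
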